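(* There are $\lambda<1$ and positive constants $A,B$ such that for each $f\in L^1_2(\mathbb{R}^d)$ with $f\ge0$ and all $m,n\ge1$, $$\|\mathcal{L}_{t,n}^mf\|_{L^1_2}\le A\lambda^m\|f\|_{L^1_2}+B\|f\|_{L^1}.$$
   Context: Consider on $\mathbb{R}^d$ the SDE $dX_t=b(X_t)dt+dW_t$, $X_0=x$, with $W$ a standard Brownian motion, $b$ Lipschitz continuous, and $\langle b(x),x\rangle\le R_1-R_2\|x\|^2$ for constants $R_1\in\mathbb{R}$, $R_2>0$. Fix $t>0$; $S_t(x,y)$ is the transition density and $(\mathcal{L}_tf)(y):=\int S_t(x,y)f(x)\,dx$. Fix $x_0\in\mathbb{R}^d$ and a real sequence $u_n\to+\infty$; $B_n:=B(x_0,e^{-u_n})$ and $(\mathcal{L}_{t,n}f)(x):=1_{B_n^c}(x)(\mathcal{L}_tf)(x)$. $\|f\|_{L^1_2}:=\int(1+|x|^2)|f|\,dx$. *)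

theory Defs
  imports "HOL-Probability.Probability"
begin

definition gauss_kernel :: "real \<Rightarrow> 'a::euclidean_space \<Rightarrow> real" where
  "gauss_kernel s y = (2 * pi * s) powr (- real DIM('a) / 2) * exp (- ((norm y)\<^sup>2) / (2 * s))"

definition std_brownian :: "'w measure \<Rightarrow> (real \<Rightarrow> 'w \<Rightarrow> 'a::euclidean_space) \<Rightarrow> bool" where
  "std_brownian M W \<longleftrightarrow> prob_space M \<and>
     (\<forall>\<omega>\<in>space M. W 0 \<omega> = 0) \<and>
     (\<forall>\<omega>\<in>space M. continuous_on {0..} (\<lambda>t. W t \<omega>)) \<and>
     (\<forall>s t. 0 \<le> s \<and> s < t \<longrightarrow>
        distributed M lborel (\<lambda>\<omega>. W t \<omega> - W s \<omega>) (\<lambda>y. ennreal (gauss_kernel (t - s) y))) \<and>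
     (\<forall>ts::real list. sorted ts \<and> (\<forall>\<tau>\<in>set ts. 0 \<le> \<tau>) \<longrightarrow>
        prob_space.indep_vars M (\<lambda>_. borel) (\<lambda>i \<omega>. W (ts ! Suc i) \<omega> - W (ts ! i) \<omega>) {..<length ts - 1})"

definition Lt :: "('a::euclidean_space \<Rightarrow> 'a \<Rightarrow> real) \<Rightarrow> ('a \<Rightarrow> real) \<Rightarrow> 'a \<Rightarrow> real" where
  "Lt S f y = (\<integral>x. S x y * f x \<partial>lborel)"

definition Ltn :: "('a::euclidean_space \<Rightarrow> 'a \<Rightarrow> real) \<Rightarrow> 'a \<Rightarrow> (nat \<Rightarrow> real) \<Rightarrow> nat \<Rightarrow> ('a \<Rightarrow> real) \<Rightarrow> 'a \<Rightarrow> real" where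
  "Ltn S x0 u n f x = indicator (- ball x0 (exp (- u n))) x * Lt S f x"

definition norm_L12 :: "('a::euclidean_space \<Rightarrow> real) \<Rightarrow> ennreal" where
  "norm_L12 f = (\<integral>\<^sup>+x. ennreal ((1 + (norm x)\<^sup>2) * \<bar>f x\<bar>) \<partial>lborel)"

definition norm_L1 :: "('a::euclidean_space \<Rightarrow> real) \<Rightarrow> ennreal" where
  "norm_L1 f = (\<integral>\<^sup>+x. ennreal \<bar>f x\<bar> \<partial>lborel)"

end

theory Submission
  imports Defs
begin


lemma meas_S:
  fixes S :: "'a::euclidean_space \<Rightarrow> 'a \<Rightarrow> real"
  assumes "(\<lambda>(x, y). S x y) \<in> borel_measurable borel"
  shows "(\<lambda>(x, y). S x y) \<in> borel_measurable (lborel \<Otimes>\<^sub>M lborel)"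
proof -
  have e: "sets (lborel \<Otimes>\<^sub>M lborel :: ('a \<times> 'a) measure) = sets borel"
    by (subst lborel_prod) simp
  show ?thesis by (subst measurable_cong_sets[OF e refl]) (rule assms)
qed

lemma Lt_le:
  fixes S :: "'a::euclidean_space \<Rightarrow> 'a \<Rightarrow> real"
  assumes "\<forall>x y. 0 \<le> S x y" "\<And>x. 0 \<le> f x"
  shows "ennreal (Lt S f y) \<le> (\<integral>\<^sup>+x. ennreal (S x y) * ennreal (f x) \<partial>lborel)"
proof (cases "integrable lborel (\<lambda>x. S x y * f x)")
  case True
  have "(\<integral>\<^sup>+x. ennreal (S x y * f x) \<partial>lborel) = ennreal (Lt S f y)"
    unfolding Lt_def by (rule nn_integral_eq_integral[OF True]) (use assms in auto)
  then show ?thesis by (simp add: ennreal_mult'' assms)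
next
  case False
  then show ?thesis by (simp add: Lt_def not_integrable_integral_eq)
qed

lemma op_step:
  fixes S :: "'a::euclidean_space \<Rightarrow> 'a \<Rightarrow> real" and lam K :: real
  assumes Snn: "\<forall>x y. 0 \<le> S x y" and Sm: "(\<lambda>(x,y). S x y) \<in> borel_measurable borel"
   and one: "\<And>x. (\<integral>\<^sup>+y. ennreal (S x y) \<partial>lborel) = 1"
   and V: "\<And>x. (\<integral>\<^sup>+y. ennreal (S x y) * ennreal (1 + (norm y)\<^sup>2) \<partial>lborel) \<le> ennreal (lam * (1 + (norm x)\<^sup>2) + K)"
   and lam: "0 \<le> lam" and K: "0 \<le> K"
   and fm: "f \<in> borel_measurable lborel" and fnn: "\<And>x. 0 \<le> f x"
  shows "Ltn S x0 u n f \<in> borel_measurable lborel \<and> (\<forall>x. 0 \<le> Ltn S x0 u n f x) \<and>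
    norm_L12 (Ltn S x0 u n f) \<le> ennreal lam * norm_L12 f + ennreal K * norm_L1 f \<and>
    norm_L1 (Ltn S x0 u n f) \<le> norm_L1 f"
proof -
  note mS[measurable] = meas_S[OF Sm]
  note [measurable] = fm
  have mS2[measurable]: "(\<lambda>(y, x). S x y * f x) \<in> borel_measurable (lborel \<Otimes>\<^sub>M lborel)"
    by measurable
  have mLt: "Lt S f \<in> borel_measurable lborel"
    unfolding Lt_def by (rule lborel.borel_measurable_lebesgue_integral) (use mS2 in simp)
  have mL[measurable]: "Ltn S x0 u n f \<in> borel_measurable lborel"
    unfolding Ltn_def using mLt by measurable
  have Ltnn: "0 \<le> Lt S f y" for y
    unfolding Lt_def by (rule integral_nonneg_AE) (use Snn fnn in auto)
  have Lnn: "0 \<le> Ltn S x0 u n f y" for y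
    unfolding Ltn_def using Ltnn by simp
  have Lle: "ennreal \<bar>Ltn S x0 u n f y\<bar> \<le> (\<integral>\<^sup>+x. ennreal (S x y) * ennreal (f x) \<partial>lborel)" for y
  proof -
    have "\<bar>Ltn S x0 u n f y\<bar> \<le> Lt S f y"
      using Ltnn[of y] by (auto simp: Ltn_def indicator_def)
    then have "ennreal \<bar>Ltn S x0 u n f y\<bar> \<le> ennreal (Lt S f y)" by (rule ennreal_leI)
    also have "\<dots> \<le> (\<integral>\<^sup>+x. ennreal (S x y) * ennreal (f x) \<partial>lborel)" by (rule Lt_le) (use Snn fnn in auto)
    finally show ?thesis .
  qed
  have m3[measurable]: "(\<lambda>(x, y). ennreal (S x y) * ennreal (f x) * ennreal (1 + (norm y)\<^sup>2)) \<in> borel_measurable (lborel \<Otimes>\<^sub>M lborel)"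
    by measurable
  have A: "norm_L12 (Ltn S x0 u n f) \<le> ennreal lam * norm_L12 f + ennreal K * norm_L1 f"
  proof -
    have "norm_L12 (Ltn S x0 u n f) = (\<integral>\<^sup>+y. ennreal (1 + (norm y)\<^sup>2) * ennreal \<bar>Ltn S x0 u n f y\<bar> \<partial>lborel)"
      unfolding norm_L12_def by (intro nn_integral_cong) (simp add: ennreal_mult)
    also have "\<dots> \<le> (\<integral>\<^sup>+y. ennreal (1 + (norm y)\<^sup>2) * (\<integral>\<^sup>+x. ennreal (S x y) * ennreal (f x) \<partial>lborel) \<partial>lborel)"
      by (intro nn_integral_mono mult_left_mono Lle) auto
    also have "\<dots> = (\<integral>\<^sup>+y. (\<integral>\<^sup>+x. ennreal (S x y) * ennreal (f x) * ennreal (1 + (norm y)\<^sup>2) \<partial>lborel) \<partial>lborel)"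
      by (intro nn_integral_cong) (simp add: nn_integral_cmult[symmetric] mult.commute mult.left_commute)
    also have "\<dots> = (\<integral>\<^sup>+x. (\<integral>\<^sup>+y. ennreal (S x y) * ennreal (f x) * ennreal (1 + (norm y)\<^sup>2) \<partial>lborel) \<partial>lborel)"
      by (rule lborel_pair.Fubini') (rule m3)
    also have "\<dots> = (\<integral>\<^sup>+x. ennreal (f x) * (\<integral>\<^sup>+y. ennreal (S x y) * ennreal (1 + (norm y)\<^sup>2) \<partial>lborel) \<partial>lborel)"
      by (intro nn_integral_cong) (simp add: nn_integral_cmult[symmetric] ac_simps mult.left_commute)
    also have "\<dots> \<le> (\<integral>\<^sup>+x. ennreal (f x) * ennreal (lam * (1 + (norm x)\<^sup>2) + K) \<partial>lborel)"
      by (intro nn_integral_mono mult_left_mono V) auto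
    also have "\<dots> = (\<integral>\<^sup>+x. ennreal lam * ennreal ((1 + (norm x)\<^sup>2) * \<bar>f x\<bar>) + ennreal K * ennreal \<bar>f x\<bar> \<partial>lborel)"
      using fnn lam K
      by (intro nn_integral_cong) (simp add: ennreal_mult[symmetric] ennreal_plus[symmetric] algebra_simps del: ennreal_plus)
    also have "\<dots> = ennreal lam * norm_L12 f + ennreal K * norm_L1 f"
      unfolding norm_L12_def norm_L1_def
      by (simp add: nn_integral_add nn_integral_cmult)
    finally show ?thesis .
  qed
  have B: "norm_L1 (Ltn S x0 u n f) \<le> norm_L1 f"
  proof -
    have "norm_L1 (Ltn S x0 u n f) \<le> (\<integral>\<^sup>+y. (\<integral>\<^sup>+x. ennreal (S x y) * ennreal (f x) \<partial>lborel) \<partial>lborel)"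
      unfolding norm_L1_def by (intro nn_integral_mono Lle)
    also have "\<dots> = (\<integral>\<^sup>+x. (\<integral>\<^sup>+y. ennreal (S x y) * ennreal (f x) \<partial>lborel) \<partial>lborel)"
      by (rule lborel_pair.Fubini') measurable
    also have "\<dots> = (\<integral>\<^sup>+x. ennreal (f x) * (\<integral>\<^sup>+y. ennreal (S x y) \<partial>lborel) \<partial>lborel)"
      by (intro nn_integral_cong) (simp add: nn_integral_cmult[symmetric] mult.commute)
    also have "\<dots> = norm_L1 f"
      unfolding norm_L1_def one using fnn by simp
    finally show ?thesis .
  qed
  show ?thesis using mL Lnn A B by blast
qed

lemma ennr_alg:
  fixes X Y :: ennreal
  assumes "0 \<le> lam" "0 \<le> a" "0 \<le> c" "0 \<le> K"
  shows "ennreal lam * (ennreal a * X + ennreal c * Y) + ennreal K * Y = ennreal (lam*a) * X + ennreal (lam*c+K) * Y"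
  using assms by (simp add: ennreal_mult ennreal_plus distrib_left distrib_right mult.assoc add.assoc)

lemma iter_step:
  fixes S :: "'a::euclidean_space \<Rightarrow> 'a \<Rightarrow> real" and lam K :: real
  assumes Snn: "\<forall>x y. 0 \<le> S x y" and Sm: "(\<lambda>(x,y). S x y) \<in> borel_measurable borel"
   and one: "\<And>x. (\<integral>\<^sup>+y. ennreal (S x y) \<partial>lborel) = 1"
   and V: "\<And>x. (\<integral>\<^sup>+y. ennreal (S x y) * ennreal (1 + (norm y)\<^sup>2) \<partial>lborel) \<le> ennreal (lam * (1 + (norm x)\<^sup>2) + K)"
   and lam: "0 \<le> lam" and K: "0 \<le> K"
   and fm: "f \<in> borel_measurable lborel" and fnn: "\<And>x. 0 \<le> f x"
  shows "(Ltn S x0 u n ^^ m) f \<in> borel_measurable lborel \<and> (\<forall>x. 0 \<le> (Ltn S x0 u n ^^ m) f x) \<and>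
    norm_L12 ((Ltn S x0 u n ^^ m) f) \<le> ennreal (lam ^ m) * norm_L12 f + ennreal (K * (\<Sum>i<m. lam ^ i)) * norm_L1 f \<and>
    norm_L1 ((Ltn S x0 u n ^^ m) f) \<le> norm_L1 f"
proof (induction m)
  case 0
  then show ?case using fm fnn by simp
next
  case (Suc m)
  let ?g = "(Ltn S x0 u n ^^ m) f"
  have gm: "?g \<in> borel_measurable lborel" and gnn: "\<And>x. 0 \<le> ?g x" using Suc by auto
  note st = op_step[OF Snn Sm one V lam K gm gnn, of x0 u n]
  have "norm_L12 ((Ltn S x0 u n ^^ Suc m) f) \<le> ennreal lam * norm_L12 ?g + ennreal K * norm_L1 ?g"
    using st by simp
  also have "\<dots> \<le> ennreal lam * (ennreal (lam ^ m) * norm_L12 f + ennreal (K * (\<Sum>i<m. lam ^ i)) * norm_L1 f) + ennreal K * norm_L1 f"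
    using Suc by (intro add_mono mult_left_mono) auto
  also have "\<dots> = ennreal (lam ^ Suc m) * norm_L12 f + ennreal (K * (\<Sum>i<Suc m. lam ^ i)) * norm_L1 f"
  proof -
    have e1: "(\<Sum>i<Suc m. lam ^ i) = 1 + lam * (\<Sum>i<m. lam ^ i)"
      by (subst sum.lessThan_Suc_shift) (simp add: sum_distrib_left)
    have nn: "0 \<le> (\<Sum>i<m. lam ^ i)" using lam by (simp add: sum_nonneg)
    have e2: "K * (\<Sum>i<Suc m. lam ^ i) = lam * (K * (\<Sum>i<m. lam ^ i)) + K"
      unfolding e1 by (simp add: algebra_simps)
    show ?thesis unfolding e2 power_Suc
      by (rule ennr_alg) (use lam K nn in auto)
  qed
  finally have "norm_L12 ((Ltn S x0 u n ^^ Suc m) f) \<le> ennreal (lam ^ Suc m) * norm_L12 f + ennreal (K * (\<Sum>i<Suc m. lam ^ i)) * norm_L1 f" .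
  moreover have "norm_L1 ((Ltn S x0 u n ^^ Suc m) f) \<le> norm_L1 f"
    using st Suc order_trans by auto
  ultimately show ?case using st by simp
qed



lemma young_aux:
  fixes L R2 p q :: real
  assumes "R2 > 0" "0 \<le> p" "0 \<le> q"
  shows "2 * (L * p * q) \<le> R2 * q\<^sup>2 + L\<^sup>2 / R2 * p\<^sup>2"
proof -
  have "0 \<le> (R2 * q - L * p)\<^sup>2" by simp
  then have "2 * R2 * (L * p * q) \<le> R2\<^sup>2 * q\<^sup>2 + L\<^sup>2 * p\<^sup>2"
    by (simp add: power2_eq_square algebra_simps)
  then have "R2 * (2 * (L * p * q)) \<le> R2 * (R2 * q\<^sup>2 + L\<^sup>2 / R2 * p\<^sup>2)"
    using assms by (simp add: power2_eq_square algebra_simps)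
  then show ?thesis using assms by simp
qed

lemma drift_ineq:
  fixes b :: "'a::euclidean_space \<Rightarrow> 'a"
  assumes L: "L-lipschitz_on UNIV b" and diss: "\<forall>x. inner (b x) x \<le> R1 - R2 * (norm x)\<^sup>2" and R2: "R2 > 0"
  shows "2 * (b (y + v) \<bullet> y) \<le> 2 * R1 - R2 * (norm y)\<^sup>2 + L\<^sup>2 / R2 * (norm v)\<^sup>2"
proof -
  have L0: "0 \<le> L" using L by (simp add: lipschitz_on_def)
  have d: "norm (b (y + v) - b y) \<le> L * norm v"
  proof -
    have "norm (b (y + v) - b y) \<le> L * norm ((y + v) - y)"
      using L unfolding lipschitz_on_def dist_norm by blast
    then show ?thesis by simp
  qed
  have "(b (y + v) - b y) \<bullet> y \<le> norm (b (y + v) - b y) * norm y"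
    by (rule norm_cauchy_schwarz)
  also have "\<dots> \<le> L * norm v * norm y"
    by (rule mult_right_mono[OF d]) simp
  finally have c: "(b (y + v) - b y) \<bullet> y \<le> L * norm v * norm y" .
  have "b (y + v) \<bullet> y = b y \<bullet> y + (b (y + v) - b y) \<bullet> y"
    by (simp add: inner_diff_left)
  then have "2 * (b (y + v) \<bullet> y) \<le> 2 * (R1 - R2 * (norm y)\<^sup>2) + 2 * (L * norm v * norm y)"
    using diss[rule_format, of y] c by (smt (verit))
  also have "\<dots> \<le> 2 * (R1 - R2 * (norm y)\<^sup>2) + (R2 * (norm y)\<^sup>2 + L\<^sup>2 / R2 * (norm v)\<^sup>2)"
    using young_aux[OF R2, of "norm v" "norm y" L] by simp
  finally show ?thesis by simp
qed

lemma path_Y: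
  fixes b :: "'a::euclidean_space \<Rightarrow> 'a" and xp w :: "real \<Rightarrow> 'a"
  assumes L: "L-lipschitz_on UNIV b" and diss: "\<forall>x. inner (b x) x \<le> R1 - R2 * (norm x)\<^sup>2"
   and R2: "R2 > 0" and t: "t > 0"
   and cxp: "continuous_on {0..t} xp" and cw: "continuous_on {0..t} w"
   and eq: "\<forall>s\<in>{0..t}. xp s = x + integral {0..s} (\<lambda>r. b (xp r)) + w s"
  shows "(norm (xp t - w t))\<^sup>2 \<le> exp (- R2 * t) * (norm x)\<^sup>2 + integral {0..t} (\<lambda>r. 2 * R1 + L\<^sup>2 / R2 * (norm (w r))\<^sup>2)"
proof -
  define h where "h r = b (xp r)" for r
  have cb: "continuous_on UNIV b" using L by (rule lipschitz_on_continuous_on)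
  have ch: "continuous_on {0..t} h"
    unfolding h_def by (rule continuous_on_compose2[OF cb cxp]) auto
  define Y where "Y s = x + integral {0..s} h" for s
  have DY: "(Y has_vector_derivative h s) (at s within {0..t})" if "s \<in> {0..t}" for s
    unfolding Y_def
    using integral_has_vector_derivative[OF ch that]
    by (auto intro!: derivative_eq_intros)
  have Yxp: "xp s = Y s + w s" if "s \<in> {0..t}" for s
    using eq that unfolding Y_def h_def by auto
  have key: "2 * (h s \<bullet> Y s) \<le> 2 * R1 - R2 * (norm (Y s))\<^sup>2 + L\<^sup>2 / R2 * (norm (w s))\<^sup>2"
    if "s \<in> {0..t}" for s
    unfolding h_def Yxp[OF that] by (rule drift_ineq[OF L diss R2])
  define g where "g r = 2 * R1 + L\<^sup>2 / R2 * (norm (w r))\<^sup>2" for r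
  have R1: "0 \<le> R1" using diss[rule_format, of 0] by simp
  have gnn: "0 \<le> g r" for r unfolding g_def using R1 R2 by simp
  have cg: "continuous_on {0..t} g"
    unfolding g_def by (intro continuous_intros cw)
  define G where "G r = exp (R2 * r) * g r" for r
  have cG: "continuous_on {0..t} G"
    unfolding G_def by (intro continuous_intros cg)
  define \<psi> where "\<psi> s = exp (R2 * s) * (Y s \<bullet> Y s) - integral {0..s} G" for s
  have Dpsi: "(\<psi> has_real_derivative
      (exp (R2 * s) * R2 * (Y s \<bullet> Y s) + exp (R2 * s) * (2 * (h s \<bullet> Y s)) - G s)) (at s within {0..t})"
    if s: "s \<in> {0..t}" for s
  proof -
    have d1: "((\<lambda>s. Y s \<bullet> Y s) has_real_derivative 2 * (h s \<bullet> Y s)) (at s within {0..t})"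
    proof -
      have "((\<lambda>s. Y s \<bullet> Y s) has_derivative (\<lambda>d. Y s \<bullet> (d *\<^sub>R h s) + (d *\<^sub>R h s) \<bullet> Y s)) (at s within {0..t})"
        using DY[OF s] unfolding has_vector_derivative_def by (intro has_derivative_inner) auto
      then show ?thesis unfolding has_field_derivative_def
        by (rule has_derivative_eq_rhs) (auto simp: inner_commute fun_eq_iff)
    qed
    have d2: "((\<lambda>u. integral {0..u} G) has_real_derivative G s) (at s within {0..t})"
      using integral_has_vector_derivative[OF cG s] by (simp add: has_real_derivative_iff_has_vector_derivative)
    show ?thesis unfolding \<psi>_def
      by (rule derivative_eq_intros d1 d2 | simp)+
  qed
  have "\<psi> t \<le> \<psi> 0"
  proof (rule DERIV_nonpos_imp_decreasing_open[of 0 t \<psi>])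
    show "0 \<le> t" using t by simp
    show "continuous_on {0..t} \<psi>"
      by (rule DERIV_continuous_on[OF Dpsi])
    fix s assume s: "0 < s" "s < t"
    then have si: "s \<in> {0..t}" by auto
    have "at s within {0..t} = at s" using s by (simp add: at_within_Icc_at)
    then have D: "DERIV \<psi> s :> exp (R2 * s) * R2 * (Y s \<bullet> Y s) + exp (R2 * s) * (2 * (h s \<bullet> Y s)) - G s"
      using Dpsi[OF si] by simp
    have "exp (R2 * s) * (2 * (h s \<bullet> Y s)) \<le> exp (R2 * s) * (2 * R1 - R2 * (norm (Y s))\<^sup>2 + L\<^sup>2 / R2 * (norm (w s))\<^sup>2)"
      by (rule mult_left_mono[OF key[OF si]]) simp
    then have "exp (R2 * s) * R2 * (Y s \<bullet> Y s) + exp (R2 * s) * (2 * (h s \<bullet> Y s)) - G s \<le> 0"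
      unfolding G_def g_def by (simp add: power2_norm_eq_inner algebra_simps)
    with D show "\<exists>y. DERIV \<psi> s :> y \<and> y \<le> 0" by blast
  qed
  then have A: "exp (R2 * t) * (Y t \<bullet> Y t) \<le> (norm x)\<^sup>2 + integral {0..t} G"
    unfolding \<psi>_def Y_def by (simp add: power2_norm_eq_inner)
  have "integral {0..t} G \<le> integral {0..t} (\<lambda>r. exp (R2 * t) * g r)"
  proof (rule integral_le)
    show "G integrable_on {0..t}" using cG by (rule integrable_continuous_interval)
    show "(\<lambda>r. exp (R2 * t) * g r) integrable_on {0..t}"
      using cg by (intro integrable_continuous_interval continuous_intros)
    fix r assume "r \<in> {0..t}"
    then show "G r \<le> exp (R2 * t) * g r"
      unfolding G_def using R2 gnn[of r] by (intro mult_right_mono) auto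
  qed
  also have "\<dots> = exp (R2 * t) * integral {0..t} g" by simp
  finally have "exp (R2 * t) * (Y t \<bullet> Y t) \<le> (norm x)\<^sup>2 + exp (R2 * t) * integral {0..t} g"
    using A by linarith
  then have "Y t \<bullet> Y t \<le> exp (- R2 * t) * (norm x)\<^sup>2 + integral {0..t} g"
    by (simp add: exp_minus field_simps)
  moreover have "xp t - w t = Y t" using Yxp[of t] t by simp
  ultimately show ?thesis unfolding g_def by (simp add: power2_norm_eq_inner)
qed



lemma BM_incr:
  assumes "std_brownian M W" "0 \<le> r" "r < s"
  shows "distributed M lborel (\<lambda>\<omega>. W s \<omega> - W r \<omega>) (\<lambda>y. ennreal (gauss_kernel (s - r) y))"
  using assms unfolding std_brownian_def by blast

lemma W_meas:
  fixes W :: "real \<Rightarrow> 'w \<Rightarrow> 'a::euclidean_space"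
  assumes BM: "std_brownian M W" and s: "0 \<le> s"
  shows "W s \<in> borel_measurable M"
proof (cases "s = 0")
  case True
  have "(\<lambda>\<omega>. (0::'a)) \<in> borel_measurable M" by simp
  then show ?thesis using BM True
    by (subst measurable_cong[where g="\<lambda>_. 0"]) (auto simp: std_brownian_def)
next
  case False
  then have "distributed M lborel (\<lambda>\<omega>. W s \<omega> - W 0 \<omega>) (\<lambda>y. ennreal (gauss_kernel (s - 0) y))"
    using BM s by (intro BM_incr) auto
  then have m: "(\<lambda>\<omega>. W s \<omega> - W 0 \<omega>) \<in> borel_measurable M"
    by (simp add: distributed_def)
  show ?thesis using BM m
    by (subst measurable_cong[where g="\<lambda>\<omega>. W s \<omega> - W 0 \<omega>"]) (auto simp: std_brownian_def)
qed

lemma gauss_one: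
  fixes W :: "real \<Rightarrow> 'w \<Rightarrow> 'a::euclidean_space"
  assumes BM: "std_brownian M W" and s: "0 < s"
  shows "(\<integral>\<^sup>+y. ennreal (gauss_kernel s y :: real) \<partial>(lborel :: 'a measure)) = 1"
proof -
  have D: "distributed M lborel (\<lambda>\<omega>. W s \<omega> - W 0 \<omega>) (\<lambda>y. ennreal (gauss_kernel (s - 0) y))"
    using BM s by (intro BM_incr) auto
  have P: "prob_space M" using BM by (simp add: std_brownian_def)
  have "(\<integral>\<^sup>+y. ennreal (gauss_kernel (s - 0) y) * 1 \<partial>(lborel :: 'a measure)) = (\<integral>\<^sup>+\<omega>. 1 \<partial>M)"
    using distributed_nn_integral[OF D, of "\<lambda>_. 1"] by simp
  also have "\<dots> = 1" using P by (simp add: prob_space.emeasure_space_1)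
  finally show ?thesis by simp
qed

lemma gauss_pointwise:
  assumes s: "0 < s"
  shows "gauss_kernel s y * (norm y)\<^sup>2 \<le> 4 * s * 2 powr (real DIM('a) / 2) * gauss_kernel (2 * s) (y :: 'a::euclidean_space)"
proof -
  define d where "d = real DIM('a)"
  define c where "c = (2 * pi * s) powr (- d / 2)"
  define z where "z = (norm y)\<^sup>2"
  have c: "0 < c" unfolding c_def using s by simp
  have z: "0 \<le> z" unfolding z_def by simp
  have g1: "gauss_kernel s y = c * exp (- z / (2 * s))"
    unfolding gauss_kernel_def c_def d_def z_def by simp
  have "(2 * pi * (2 * s)) powr (- d / 2) = 2 powr (- d / 2) * c"
    unfolding c_def using s by (simp add: powr_mult[symmetric] mult.assoc mult.left_commute)
  moreover have "2 powr (d / 2) * 2 powr (- d / 2) = (1::real)"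
    by (simp add: powr_add[symmetric])
  ultimately have g2: "2 powr (d / 2) * gauss_kernel (2 * s) y = c * exp (- z / (4 * s))"
    unfolding gauss_kernel_def z_def d_def by (simp add: mult.assoc[symmetric])
  have a: "z / (4 * s) \<le> exp (z / (4 * s))"
    using exp_ge_add_one_self[of "z / (4 * s)"] by linarith
  have "z * exp (- z / (4 * s)) \<le> 4 * s"
  proof -
    have "z = 4 * s * (z / (4 * s))" using s by simp
    also have "\<dots> \<le> 4 * s * exp (z / (4 * s))" using a s by (intro mult_left_mono) auto
    finally have "z \<le> 4 * s * exp (z / (4 * s))" .
    then have "z * exp (- z / (4 * s)) \<le> 4 * s * exp (z / (4 * s)) * exp (- z / (4 * s))"
      by (rule mult_right_mono) simp
    also have "\<dots> = 4 * s" by (simp add: exp_minus field_simps)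
    finally show ?thesis .
  qed
  then have "z * exp (- z / (4 * s)) * exp (- z / (4 * s)) \<le> 4 * s * exp (- z / (4 * s))"
    by (rule mult_right_mono) simp
  moreover have "exp (- z / (2 * s)) = exp (- z / (4 * s)) * exp (- z / (4 * s))"
    using s by (simp add: exp_add[symmetric] field_simps)
  ultimately have "exp (- z / (2 * s)) * z \<le> 4 * s * exp (- z / (4 * s))"
    by (simp add: algebra_simps)
  then have "c * exp (- z / (2 * s)) * z \<le> c * (4 * s * exp (- z / (4 * s)))"
    using c by (simp add: mult.assoc)
  have "gauss_kernel s y * (norm y)\<^sup>2 = c * exp (- z / (2 * s)) * z"
    unfolding g1 z_def by simp
  also have "\<dots> \<le> c * (4 * s * exp (- z / (4 * s)))" by fact
  also have "\<dots> = 4 * s * (2 powr (d / 2) * gauss_kernel (2 * s) y)"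
    unfolding g2 by simp
  finally show ?thesis unfolding d_def by (simp add: mult.assoc)
qed

lemma W_moment:
  fixes W :: "real \<Rightarrow> 'w \<Rightarrow> 'a::euclidean_space"
  assumes BM: "std_brownian M W" and s: "0 \<le> s"
  shows "(\<integral>\<^sup>+\<omega>. ennreal ((norm (W s \<omega>))\<^sup>2) \<partial>M) \<le> ennreal (4 * s * 2 powr (real DIM('a) / 2))"
proof (cases "s = 0")
  case True
  then have "(\<integral>\<^sup>+\<omega>. ennreal ((norm (W s \<omega>))\<^sup>2) \<partial>M) = (\<integral>\<^sup>+\<omega>. 0 \<partial>M)"
    using BM by (intro nn_integral_cong) (auto simp: std_brownian_def)
  then show ?thesis by simp
next
  case False
  then have s: "0 < s" using s by simp
  have D: "distributed M lborel (\<lambda>\<omega>. W s \<omega> - W 0 \<omega>) (\<lambda>y. ennreal (gauss_kernel (s - 0) y))"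
    using BM s by (intro BM_incr) auto
  have "(\<integral>\<^sup>+\<omega>. ennreal ((norm (W s \<omega>))\<^sup>2) \<partial>M) = (\<integral>\<^sup>+\<omega>. ennreal ((norm (W s \<omega> - W 0 \<omega>))\<^sup>2) \<partial>M)"
    using BM by (intro nn_integral_cong) (auto simp: std_brownian_def)
  also have "\<dots> = (\<integral>\<^sup>+y. ennreal (gauss_kernel (s - 0) y) * ennreal ((norm y)\<^sup>2) \<partial>(lborel :: 'a measure))"
    using distributed_nn_integral[OF D, of "\<lambda>y. ennreal ((norm y)\<^sup>2)"] by simp
  also have "\<dots> \<le> (\<integral>\<^sup>+y. ennreal (4 * s * 2 powr (real DIM('a) / 2)) * ennreal (gauss_kernel (2 * s) y) \<partial>(lborel :: 'a measure))"
  proof (intro nn_integral_mono)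
    fix y :: 'a
    have "0 \<le> gauss_kernel s y" by (simp add: gauss_kernel_def)
    then show "ennreal (gauss_kernel (s - 0) y) * ennreal ((norm y)\<^sup>2) \<le> ennreal (4 * s * 2 powr (real DIM('a) / 2)) * ennreal (gauss_kernel (2 * s) y)"
    proof -
      have g2: "0 \<le> gauss_kernel (2 * s) y" by (simp add: gauss_kernel_def)
      have e: "ennreal (4 * s * 2 powr (real DIM('a) / 2)) * ennreal (gauss_kernel (2 * s) y) = ennreal (4 * s * 2 powr (real DIM('a) / 2) * gauss_kernel (2 * s) y)"
        using s g2 by (simp add: ennreal_mult[symmetric])
      have g1: "0 \<le> gauss_kernel s y" by (simp add: gauss_kernel_def)
      show ?thesis unfolding e using gauss_pointwise[OF s, of y] s g1
        by (simp add: ennreal_mult[symmetric] ennreal_leI)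
    qed
  qed
  also have "\<dots> = ennreal (4 * s * 2 powr (real DIM('a) / 2)) * (\<integral>\<^sup>+y. ennreal (gauss_kernel (2 * s) y :: real) \<partial>(lborel :: 'a measure))"
    by (rule nn_integral_cmult) (unfold gauss_kernel_def, measurable)
  also have "\<dots> = ennreal (4 * s * 2 powr (real DIM('a) / 2))"
    using gauss_one[OF BM, of "2 * s"] s by simp
  finally show ?thesis .
qed

lemma W_joint:
  fixes W :: "real \<Rightarrow> 'w \<Rightarrow> 'a::euclidean_space"
  assumes BM: "std_brownian M W"
  shows "(\<lambda>p. W (max 0 (snd p)) (fst p)) \<in> borel_measurable (M \<Otimes>\<^sub>M lborel)"
proof -
  define q where "q i r = real_of_int \<lceil>max 0 r * real (Suc i)\<rceil> / real (Suc i)" for i :: nat and r :: real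
  define F where "F i p = W (max 0 (real_of_int \<lceil>max 0 (snd p) * real (Suc i)\<rceil> / real (Suc i))) (fst p)" for i p
  have mF: "F i \<in> borel_measurable (M \<Otimes>\<^sub>M lborel)" for i
  proof -
    have "(\<lambda>p. (\<lambda>k p. W (max 0 (real_of_int k / real (Suc i))) (fst p)) (\<lceil>max 0 (snd p) * real (Suc i)\<rceil>) p)
       \<in> borel_measurable (M \<Otimes>\<^sub>M lborel)"
    proof -
      have f1: "(\<lambda>p. W (max 0 (real_of_int k / real (Suc i))) (fst p)) \<in> borel_measurable (M \<Otimes>\<^sub>M lborel)" for k :: int
        using W_meas[OF BM, of "max 0 (real_of_int k / real (Suc i))"]
        by (intro measurable_compose[OF measurable_fst]) auto
      have g1: "(\<lambda>p. \<lceil>max 0 (snd p) * real (Suc i)\<rceil>) \<in> measurable (M \<Otimes>\<^sub>M lborel) (count_space UNIV)"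
        by measurable
      show ?thesis by (rule measurable_compose_countable'[OF f1 g1]) simp
    qed
    then show ?thesis unfolding F_def by simp
  qed
  have lim: "(\<lambda>i. F i p) \<longlonglongrightarrow> W (max 0 (snd p)) (fst p)" if p: "p \<in> space (M \<Otimes>\<^sub>M lborel)" for p
  proof -
    obtain \<omega> r where pe: "p = (\<omega>, r)" by (cases p)
    have om: "\<omega> \<in> space M" using p pe by (simp add: space_pair_measure)
    have cont: "continuous_on {0..} (\<lambda>t. W t \<omega>)" using BM om by (simp add: std_brownian_def)
    define r' where "r' = max 0 r"
    have r'0: "0 \<le> r'" unfolding r'_def by simp
    have qlo: "r' \<le> q i r" for i
    proof -
      have "r' * real (Suc i) \<le> real_of_int \<lceil>r' * real (Suc i)\<rceil>" by (rule le_of_int_ceiling)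
      then show ?thesis unfolding q_def r'_def[symmetric] by (simp add: field_simps)
    qed
    have qhi: "q i r \<le> r' + inverse (real (Suc i))" for i
    proof -
      have "real_of_int \<lceil>r' * real (Suc i)\<rceil> \<le> r' * real (Suc i) + 1" using ceiling_correct[of "r' * real (Suc i)"] by linarith
      then have "q i r \<le> (r' * real (Suc i) + 1) / real (Suc i)"
        unfolding q_def r'_def[symmetric] by (intro divide_right_mono) auto
      also have "\<dots> = r' + inverse (real (Suc i))" by (simp add: field_simps)
      finally show ?thesis .
    qed
    have "(\<lambda>i. r' + inverse (real (Suc i))) \<longlonglongrightarrow> r' + 0"
      by (intro tendsto_add tendsto_const LIMSEQ_inverse_real_of_nat)
    then have h: "(\<lambda>i. r' + inverse (real (Suc i))) \<longlonglongrightarrow> r'" by simp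
    have e1: "\<forall>\<^sub>F i in sequentially. r' \<le> q i r" by (intro always_eventually allI qlo)
    have e2: "\<forall>\<^sub>F i in sequentially. q i r \<le> r' + inverse (real (Suc i))" by (intro always_eventually allI qhi)
    have qt: "(\<lambda>i. q i r) \<longlonglongrightarrow> r'"
      by (rule tendsto_sandwich[OF e1 e2 tendsto_const h])
    have e3: "\<forall>\<^sub>F i in sequentially. q i r \<in> {0..}"
      using r'0 qlo by (intro always_eventually allI) (auto intro: order_trans)
    have "(\<lambda>i. W (q i r) \<omega>) \<longlonglongrightarrow> W r' \<omega>"
      by (rule continuous_on_tendsto_compose[OF cont qt _ e3]) (use r'0 in simp)
    moreover have "F i p = W (q i r) \<omega>" for i
      unfolding F_def pe q_def using qlo[of i] r'0 unfolding q_def r'_def by simp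
    ultimately show ?thesis unfolding pe r'_def by simp
  qed
  show ?thesis by (rule borel_measurable_LIMSEQ_metric[OF mF lim])
qed



lemma young2:
  fixes Y v :: "'a::real_inner"
  assumes e: "\<epsilon> > 0"
  shows "(norm (Y + v))\<^sup>2 \<le> (1 + \<epsilon>) * (norm Y)\<^sup>2 + (1 + 1 / \<epsilon>) * (norm v)\<^sup>2"
proof -
  have "(norm (Y + v))\<^sup>2 = (norm Y)\<^sup>2 + 2 * (Y \<bullet> v) + (norm v)\<^sup>2"
    by (simp add: power2_norm_eq_inner inner_add_left inner_add_right inner_commute)
  also have "Y \<bullet> v \<le> 1 * norm v * norm Y"
    using norm_cauchy_schwarz[of Y v] by (simp add: mult.commute)
  then have "2 * (Y \<bullet> v) \<le> \<epsilon> * (norm Y)\<^sup>2 + 1\<^sup>2 / \<epsilon> * (norm v)\<^sup>2"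
    using young_aux[OF e, of "norm v" "norm Y" 1] by simp
  then have "(norm Y)\<^sup>2 + 2 * (Y \<bullet> v) + (norm v)\<^sup>2 \<le> (1 + \<epsilon>) * (norm Y)\<^sup>2 + (1 + 1 / \<epsilon>) * (norm v)\<^sup>2"
    by (simp add: algebra_simps)
  finally show ?thesis .
qed

lemma path_X:
  fixes b :: "'a::euclidean_space \<Rightarrow> 'a" and xp w :: "real \<Rightarrow> 'a"
  assumes L: "L-lipschitz_on UNIV b" and diss: "\<forall>x. inner (b x) x \<le> R1 - R2 * (norm x)\<^sup>2"
   and R2: "R2 > 0" and t: "t > 0"
   and cxp: "continuous_on {0..t} xp" and cw: "continuous_on {0..t} w"
   and eq: "\<forall>s\<in>{0..t}. xp s = x + integral {0..s} (\<lambda>r. b (xp r)) + w s"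
   and ed: "e = exp (- R2 * t)" and epsd: "\<epsilon> = (1 - e) / (2 * e)"
  shows "(norm (xp t))\<^sup>2 \<le> (1 + e) / 2 * (norm x)\<^sup>2 + (1 + \<epsilon>) * (2 * R1 * t)
     + (1 + \<epsilon>) * (L\<^sup>2 / R2) * integral {0..t} (\<lambda>r. (norm (w r))\<^sup>2) + (1 + 1 / \<epsilon>) * (norm (w t))\<^sup>2"
proof -
  have e0: "0 < e" and e1: "e < 1" using ed R2 t by auto
  have eps: "\<epsilon> > 0" using e0 e1 epsd by simp
  have PY: "(norm (xp t - w t))\<^sup>2 \<le> e * (norm x)\<^sup>2 + integral {0..t} (\<lambda>r. 2 * R1 + L\<^sup>2 / R2 * (norm (w r))\<^sup>2)"
    using path_Y[OF L diss R2 t cxp cw eq] ed by simp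
  have cn: "continuous_on {0..t} (\<lambda>r. (norm (w r))\<^sup>2)" by (intro continuous_intros cw)
  have int: "integral {0..t} (\<lambda>r. 2 * R1 + L\<^sup>2 / R2 * (norm (w r))\<^sup>2) = 2 * R1 * t + L\<^sup>2 / R2 * integral {0..t} (\<lambda>r. (norm (w r))\<^sup>2)"
  proof -
    have i1: "(\<lambda>r. L\<^sup>2 / R2 * (norm (w r))\<^sup>2) integrable_on {0..t}"
      by (intro integrable_continuous_interval continuous_intros cw)
    have "integral {0..t} (\<lambda>r. 2 * R1 + L\<^sup>2 / R2 * (norm (w r))\<^sup>2) = integral {0..t} (\<lambda>r. 2 * R1) + integral {0..t} (\<lambda>r. L\<^sup>2 / R2 * (norm (w r))\<^sup>2)"
      by (rule integral_add[OF integrable_continuous_interval[OF continuous_on_const] i1])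
    then show ?thesis using t by simp
  qed
  have fe: "(1 + \<epsilon>) * e = (1 + e) / 2" using epsd e0 by (simp add: field_simps)
  have fe': "(1 + \<epsilon>) * (e * (norm x)\<^sup>2) = (1 + e) / 2 * (norm x)\<^sup>2"
    by (simp only: mult.assoc[symmetric] fe)
  have "(norm (xp t))\<^sup>2 = (norm ((xp t - w t) + w t))\<^sup>2" by simp
  also have "\<dots> \<le> (1 + \<epsilon>) * (norm (xp t - w t))\<^sup>2 + (1 + 1 / \<epsilon>) * (norm (w t))\<^sup>2"
    by (rule young2[OF eps])
  also have "\<dots> \<le> (1 + \<epsilon>) * (e * (norm x)\<^sup>2 + (2 * R1 * t + L\<^sup>2 / R2 * integral {0..t} (\<lambda>r. (norm (w r))\<^sup>2))) + (1 + 1 / \<epsilon>) * (norm (w t))\<^sup>2"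
    using PY eps unfolding int by (intro add_right_mono mult_left_mono) auto
  also have "(1 + \<epsilon>) * (e * (norm x)\<^sup>2 + (2 * R1 * t + L\<^sup>2 / R2 * integral {0..t} (\<lambda>r. (norm (w r))\<^sup>2))) + (1 + 1 / \<epsilon>) * (norm (w t))\<^sup>2
      = (1 + e) / 2 * (norm x)\<^sup>2 + (1 + \<epsilon>) * (2 * R1 * t)
     + (1 + \<epsilon>) * (L\<^sup>2 / R2) * integral {0..t} (\<lambda>r. (norm (w r))\<^sup>2) + (1 + 1 / \<epsilon>) * (norm (w t))\<^sup>2"
    unfolding distrib_left fe' by (simp add: algebra_simps)
  finally show ?thesis .
qed

lemma kernel_bound:
  fixes b :: "'a::euclidean_space \<Rightarrow> 'a" and M :: "'w measure"
    and W :: "real \<Rightarrow> 'w \<Rightarrow> 'a" and X :: "'a \<Rightarrow> real \<Rightarrow> 'w \<Rightarrow> 'a"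
    and S :: "'a \<Rightarrow> 'a \<Rightarrow> real" and t R1 R2 :: real
assumes lip: "\<exists>C. C-lipschitz_on UNIV b"
    and diss: "\<forall>x. inner (b x) x \<le> R1 - R2 * (norm x)\<^sup>2" and R2: "R2 > 0"
    and BM: "std_brownian M W"
    and sol: "\<forall>x. \<forall>\<omega>\<in>space M. continuous_on {0..} (\<lambda>s. X x s \<omega>) \<and>
               (\<forall>s\<ge>0. X x s \<omega> = x + integral {0..s} (\<lambda>r. b (X x r \<omega>)) + W s \<omega>)"
    and t: "t > 0"
    and S_nonneg: "\<forall>x y. 0 \<le> S x y"
    and S_meas: "(\<lambda>(x, y). S x y) \<in> borel_measurable borel"
    and S_dens: "\<forall>x. distributed M lborel (X x t) (\<lambda>y. ennreal (S x y))"
  shows "\<exists>lam K. 0 \<le> lam \<and> lam < 1 \<and> 0 \<le> K \<and> (\<forall>x. (\<integral>\<^sup>+y. ennreal (S x y) * ennreal (1 + (norm y)\<^sup>2) \<partial>lborel) \<le> ennreal (lam * (1 + (norm x)\<^sup>2) + K))"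
proof -
  obtain L where L: "L-lipschitz_on UNIV b" using lip by blast
  have P: "prob_space M" using BM by (simp add: std_brownian_def)
  interpret PS: pair_sigma_finite M lborel
    unfolding pair_sigma_finite_def using prob_space_imp_sigma_finite[OF P] sigma_finite_lborel by blast
  define e where "e = exp (- R2 * t)"
  define eps where "eps = (1 - e) / (2 * e)"
  define lam0 where "lam0 = (1 + e) / 2"
  define Kw where "Kw = 4 * t * 2 powr (real DIM('a) / 2)"
  define c1 where "c1 = (1 + eps) * (L\<^sup>2 / R2)"
  define c2 where "c2 = 1 + 1 / eps"
  define C0 where "C0 = (1 + eps) * (2 * R1 * t)"
  define K where "K = 1 + C0 + c1 * Kw * t + c2 * Kw"
  have e0: "0 < e" and e1: "e < 1" using R2 t unfolding e_def by auto
  have eps: "0 < eps" unfolding eps_def using e0 e1 by simp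
  have R1: "0 \<le> R1" using diss[rule_format, of 0] by simp
  have Kw: "0 \<le> Kw" unfolding Kw_def using t by simp
  have c1: "0 \<le> c1" unfolding c1_def using eps R2 by simp
  have c2: "0 \<le> c2" unfolding c2_def using eps by simp
  have C0: "0 \<le> C0" unfolding C0_def using eps R1 t by simp
  have K: "0 \<le> K" unfolding K_def using C0 c1 c2 Kw t by simp
  have lam0: "0 \<le> lam0" "lam0 < 1" unfolding lam0_def using e0 e1 by auto
  define G where "G p = W (max 0 (snd p)) (fst p)" for p
  have mG[measurable]: "G \<in> borel_measurable (M \<Otimes>\<^sub>M lborel)"
    unfolding G_def by (rule W_joint[OF BM])
  have mW: "(\<lambda>(\<omega>, r). ennreal (indicator {0..t} r * (norm (G (\<omega>, r)))\<^sup>2)) \<in> borel_measurable (M \<Otimes>\<^sub>M lborel)"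
    by measurable
  define F where "F \<omega> = (\<integral>\<^sup>+r. ennreal (indicator {0..t} r * (norm (G (\<omega>, r)))\<^sup>2) \<partial>lborel)" for \<omega>
  have mF: "F \<in> borel_measurable M"
    unfolding F_def using mW by (rule lborel.borel_measurable_nn_integral)
  have mWt: "(\<lambda>\<omega>. ennreal ((norm (W t \<omega>))\<^sup>2)) \<in> borel_measurable M"
    using W_meas[OF BM, of t] t by simp
  have EF: "(\<integral>\<^sup>+\<omega>. F \<omega> \<partial>M) \<le> ennreal Kw * ennreal t"
  proof -
    have "(\<integral>\<^sup>+\<omega>. F \<omega> \<partial>M) = (\<integral>\<^sup>+r. (\<integral>\<^sup>+\<omega>. ennreal (indicator {0..t} r * (norm (G (\<omega>, r)))\<^sup>2) \<partial>M) \<partial>lborel)"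
      unfolding F_def by (rule PS.Fubini'[OF mW, symmetric])
    also have "\<dots> \<le> (\<integral>\<^sup>+r. ennreal Kw * indicator {0..t} r \<partial>lborel)"
    proof (rule nn_integral_mono)
      fix r :: real
      show "(\<integral>\<^sup>+\<omega>. ennreal (indicator {0..t} r * (norm (G (\<omega>, r)))\<^sup>2) \<partial>M) \<le> ennreal Kw * indicator {0..t} r"
      proof (cases "r \<in> {0..t}")
        case True
        have "(\<integral>\<^sup>+\<omega>. ennreal (indicator {0..t} r * (norm (G (\<omega>, r)))\<^sup>2) \<partial>M) = (\<integral>\<^sup>+\<omega>. ennreal ((norm (W r \<omega>))\<^sup>2) \<partial>M)"
          using True unfolding G_def by (intro nn_integral_cong) auto
        also have "\<dots> \<le> ennreal (4 * r * 2 powr (real DIM('a) / 2))"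
          using True by (intro W_moment[OF BM]) auto
        also have "\<dots> \<le> ennreal Kw"
          unfolding Kw_def using True by (intro ennreal_leI mult_right_mono) auto
        finally show ?thesis using True by simp
      next
        case False
        then show ?thesis by simp
      qed
    qed
    also have "\<dots> = ennreal Kw * ennreal t"
      using t by (simp add: nn_integral_cmult_indicator)
    finally show ?thesis .
  qed
  have EWt: "(\<integral>\<^sup>+\<omega>. ennreal ((norm (W t \<omega>))\<^sup>2) \<partial>M) \<le> ennreal Kw"
    unfolding Kw_def using t by (intro W_moment[OF BM]) auto
  show ?thesis
  proof (intro exI conjI allI)
    fix x :: 'a
    define a0 where "a0 = 1 + lam0 * (norm x)\<^sup>2 + C0"
    have a0: "0 \<le> a0" unfolding a0_def using lam0 C0 by simp
    have pw: "ennreal (1 + (norm (X x t \<omega>))\<^sup>2) \<le> ennreal a0 + ennreal c1 * F \<omega> + ennreal c2 * ennreal ((norm (W t \<omega>))\<^sup>2)"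
      if om: "\<omega> \<in> space M" for \<omega>
    proof -
      have cX: "continuous_on {0..t} (\<lambda>s. X x s \<omega>)"
      proof -
        have "continuous_on {0..} (\<lambda>s. X x s \<omega>)" using sol om by blast
        then show ?thesis by (rule continuous_on_subset) auto
      qed
      have cw: "continuous_on {0..t} (\<lambda>s. W s \<omega>)"
      proof -
        have "continuous_on {0..} (\<lambda>s. W s \<omega>)" using BM om unfolding std_brownian_def by blast
        then show ?thesis by (rule continuous_on_subset) auto
      qed
      have eq: "\<forall>s\<in>{0..t}. X x s \<omega> = x + integral {0..s} (\<lambda>r. b (X x r \<omega>)) + W s \<omega>"
        using sol om by auto
      define I where "I = integral {0..t} (\<lambda>r. (norm (W r \<omega>))\<^sup>2)"
      have pX: "(norm (X x t \<omega>))\<^sup>2 \<le> lam0 * (norm x)\<^sup>2 + C0 + c1 * I + c2 * (norm (W t \<omega>))\<^sup>2"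
        using path_X[OF L diss R2 t cX cw eq e_def eps_def]
        unfolding lam0_def C0_def c1_def c2_def I_def by simp
      have hI: "((\<lambda>r. (norm (W r \<omega>))\<^sup>2) has_integral I) {0..t}"
        unfolding I_def by (intro integrable_integral integrable_continuous_interval continuous_intros cw)
      have hI': "((\<lambda>r. (norm (G (\<omega>, r)))\<^sup>2) has_integral I) {0..t}"
        by (rule has_integral_eq[OF _ hI]) (auto simp: G_def)
      have FI: "F \<omega> = ennreal I"
        unfolding F_def by (rule nn_integral_has_integral_lebesgue[OF _ hI']) simp
      have I0: "0 \<le> I" using hI by (rule has_integral_nonneg) simp
      have "ennreal (1 + (norm (X x t \<omega>))\<^sup>2) \<le> ennreal (a0 + c1 * I + c2 * (norm (W t \<omega>))\<^sup>2)"
        using pX unfolding a0_def by (intro ennreal_leI) simp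
      also have "\<dots> = ennreal a0 + ennreal c1 * ennreal I + ennreal c2 * ennreal ((norm (W t \<omega>))\<^sup>2)"
        using a0 c1 c2 I0 by (simp add: ennreal_plus ennreal_mult)
      finally show ?thesis unfolding FI .
    qed
    have "(\<integral>\<^sup>+y. ennreal (S x y) * ennreal (1 + (norm y)\<^sup>2) \<partial>lborel) = (\<integral>\<^sup>+\<omega>. ennreal (1 + (norm (X x t \<omega>))\<^sup>2) \<partial>M)"
      using distributed_nn_integral[OF S_dens[rule_format, of x], of "\<lambda>y. ennreal (1 + (norm y)\<^sup>2)"] by simp
    also have "\<dots> \<le> (\<integral>\<^sup>+\<omega>. ennreal a0 + ennreal c1 * F \<omega> + ennreal c2 * ennreal ((norm (W t \<omega>))\<^sup>2) \<partial>M)"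
      by (rule nn_integral_mono) (rule pw)
    also have "\<dots> = ennreal a0 + ennreal c1 * (\<integral>\<^sup>+\<omega>. F \<omega> \<partial>M) + ennreal c2 * (\<integral>\<^sup>+\<omega>. ennreal ((norm (W t \<omega>))\<^sup>2) \<partial>M)"
      using mF mWt P by (simp add: nn_integral_add nn_integral_cmult prob_space.emeasure_space_1)
    also have "\<dots> \<le> ennreal a0 + ennreal c1 * (ennreal Kw * ennreal t) + ennreal c2 * ennreal Kw"
      by (intro add_mono mult_left_mono EF EWt order_refl) auto
    also have "\<dots> = ennreal (lam0 * (norm x)\<^sup>2 + K)"
      unfolding K_def a0_def using a0 c1 c2 Kw t C0 lam0
      by (simp add: ennreal_plus[symmetric] ennreal_mult[symmetric] del: ennreal_plus)
    also have "\<dots> \<le> ennreal (lam0 * (1 + (norm x)\<^sup>2) + K)"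
      using lam0 by (intro ennreal_leI) (simp add: algebra_simps)
    finally show "(\<integral>\<^sup>+y. ennreal (S x y) * ennreal (1 + (norm y)\<^sup>2) \<partial>lborel) \<le> ennreal (lam0 * (1 + (norm x)\<^sup>2) + K)" .
  qed (use lam0 K in auto)
qed


theorem lemma25:
  fixes b :: "'a::euclidean_space \<Rightarrow> 'a" and M :: "'w measure"
    and W :: "real \<Rightarrow> 'w \<Rightarrow> 'a" and X :: "'a \<Rightarrow> real \<Rightarrow> 'w \<Rightarrow> 'a"
    and S :: "'a \<Rightarrow> 'a \<Rightarrow> real" and t R1 R2 :: real and x0 :: 'a and u :: "nat \<Rightarrow> real"
  assumes lip: "\<exists>C. C-lipschitz_on UNIV b"
    and diss: "\<forall>x. inner (b x) x \<le> R1 - R2 * (norm x)\<^sup>2" and R2: "R2 > 0"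
    and BM: "std_brownian M W"
    and sol: "\<forall>x. \<forall>\<omega>\<in>space M. continuous_on {0..} (\<lambda>s. X x s \<omega>) \<and>
               (\<forall>s\<ge>0. X x s \<omega> = x + integral {0..s} (\<lambda>r. b (X x r \<omega>)) + W s \<omega>)"
    and t: "t > 0"
    and S_nonneg: "\<forall>x y. 0 \<le> S x y"
    and S_meas: "(\<lambda>(x, y). S x y) \<in> borel_measurable borel"
    and S_dens: "\<forall>x. distributed M lborel (X x t) (\<lambda>y. ennreal (S x y))"
    and u: "filterlim u at_top sequentially"
  shows "\<exists>lam A B. 0 \<le> lam \<and> lam < 1 \<and> A > 0 \<and> B > 0 \<and>
    (\<forall>f. f \<in> borel_measurable lborel \<and> (\<forall>x. 0 \<le> f x) \<and> norm_L12 f < \<infinity> \<longrightarrow>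
      (\<forall>m n. 1 \<le> m \<and> 1 \<le> n \<longrightarrow>
        norm_L12 ((Ltn S x0 u n ^^ m) f)
          \<le> ennreal (A * lam ^ m) * norm_L12 f + ennreal B * norm_L1 f))"
proof -
  obtain lam K where lam: "0 \<le> lam" "lam < 1" and K: "0 \<le> K"
    and V: "\<And>x. (\<integral>\<^sup>+y. ennreal (S x y) * ennreal (1 + (norm y)\<^sup>2) \<partial>lborel) \<le> ennreal (lam * (1 + (norm x)\<^sup>2) + K)"
    using kernel_bound[OF lip diss R2 BM sol t S_nonneg S_meas S_dens] by blast
  have P: "prob_space M" using BM by (simp add: std_brownian_def)
  have one: "(\<integral>\<^sup>+y. ennreal (S x y) \<partial>lborel) = 1" for x
  proof -
    have "(\<integral>\<^sup>+y. ennreal (S x y) * 1 \<partial>lborel) = (\<integral>\<^sup>+\<omega>. 1 \<partial>M)"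
      by (rule distributed_nn_integral[OF S_dens[rule_format, of x]]) simp
    also have "\<dots> = 1" using P by (simp add: prob_space.emeasure_space_1)
    finally show ?thesis by simp
  qed
  define B where "B = K / (1 - lam) + 1"
  have Bpos: "B > 0" using lam K by (simp add: B_def add_nonneg_pos)
  show ?thesis
  proof (intro exI conjI allI impI)
    fix f :: "'a \<Rightarrow> real" and m n :: nat
    assume f: "f \<in> borel_measurable lborel \<and> (\<forall>x. 0 \<le> f x) \<and> norm_L12 f < \<infinity>"
      and mn: "1 \<le> m \<and> 1 \<le> n"
    have it: "norm_L12 ((Ltn S x0 u n ^^ m) f) \<le> ennreal (lam ^ m) * norm_L12 f + ennreal (K * (\<Sum>i<m. lam ^ i)) * norm_L1 f"
    proof -
      have "(Ltn S x0 u n ^^ m) f \<in> borel_measurable lborel \<and> (\<forall>x. 0 \<le> (Ltn S x0 u n ^^ m) f x) \<and>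
        norm_L12 ((Ltn S x0 u n ^^ m) f) \<le> ennreal (lam ^ m) * norm_L12 f + ennreal (K * (\<Sum>i<m. lam ^ i)) * norm_L1 f \<and>
        norm_L1 ((Ltn S x0 u n ^^ m) f) \<le> norm_L1 f"
        by (rule iter_step[OF S_nonneg S_meas one V lam(1) K]) (use f in auto)
      then show ?thesis by blast
    qed
    have "(\<Sum>i<m. lam ^ i) \<le> 1 / (1 - lam)"
      using lam by (simp add: sum_gp_strict divide_right_mono)
    then have "K * (\<Sum>i<m. lam ^ i) \<le> K * (1 / (1 - lam))"
      using K by (rule mult_left_mono)
    then have "K * (\<Sum>i<m. lam ^ i) \<le> B"
      unfolding B_def by simp
    then have "ennreal (K * (\<Sum>i<m. lam ^ i)) * norm_L1 f \<le> ennreal B * norm_L1 f"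
      by (intro mult_right_mono ennreal_leI) auto
    then have "ennreal (lam ^ m) * norm_L12 f + ennreal (K * (\<Sum>i<m. lam ^ i)) * norm_L1 f \<le> ennreal (lam ^ m) * norm_L12 f + ennreal B * norm_L1 f"
      by (rule add_left_mono)
    with it have "norm_L12 ((Ltn S x0 u n ^^ m) f) \<le> ennreal (lam ^ m) * norm_L12 f + ennreal B * norm_L1 f"
      by (rule order_trans)
    then show "norm_L12 ((Ltn S x0 u n ^^ m) f) \<le> ennreal (1 * lam ^ m) * norm_L12 f + ennreal B * norm_L1 f"
      by simp
  qed (use lam Bpos in auto)
qed

end
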